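(* Let $\eta>0$, let $\mathcal{I},\mathcal{J},\mathcal{K}$ be finite index sets with cluster trees $\mathcal{T}_{\mathcal{I}},\mathcal{T}_{\mathcal{J}},\mathcal{T}_{\mathcal{K}}$, where every cluster $c$ is associated with a nonempty bounded set $\Omega_c\subseteq\mathbb{R}^d$, and let $\mathcal{T}_{\mathcal{I}\times\mathcal{J}}$ and $\mathcal{T}_{\mathcal{J}\times\mathcal{K}}$ be block trees constructed by the admissibility-based procedure described in the context (so that every non-leaf block is not admissible). Let $t\in\mathcal{T}_{\mathcal{I}}$ and $r\in\mathcal{T}_{\mathcal{K}}$, and let $\mathcal{P}_{tr}$ be the set of subdivided products of the accumulator for $(t,r)$, as defined in the context. If $\mathcal{P}_{tr}$ is not empty, then there is a cluster $s\in\mathcal{T}_{\mathcal{J}}$ with $(t,s)\in\mathcal{T}_{\mathcal{I}\times\mathcal{J}}\setminus\mathcal{L}_{\mathcal{I}\times\mathcal{J}}$ and $(s,r)\in\mathcal{T}_{\mathcal{J}\times\mathcal{K}}\setminus\mathcal{L}_{\mathcal{J}\times\mathcal{K}}$ such that \[ \frac{\eta}{\eta+1}\operatorname{dist}(\Omega_t,\Omega_r) < \max\{\operatorname{diam}(\Omega_t),\operatorname{diam}(\Omega_s),\operatorname{diam}(\Omega_r)\}. \]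
   Context: A cluster tree $\mathcal{T}_{\mathcal{I}}$ for a finite index set $\mathcal{I}$ is a finite tree whose nodes (clusters) $t$ are labeled by subsets $\hat t\subseteq\mathcal{I}$, the root labeled $\mathcal{I}$, such that the labels of the children of a non-leaf node form a disjoint partition of its label. Each cluster $t$ has an associated nonempty bounded set $\Omega_t\subseteq\mathbb{R}^d$ (with $\Omega_{t'}\subseteq\Omega_t$ for children $t'$). A pair of clusters $(t,s)$ is called admissible if $\max\{\operatorname{diam}(\Omega_t),\operatorname{diam}(\Omega_s)\}\le 2\eta\operatorname{dist}(\Omega_t,\Omega_s)$. The block tree $\mathcal{T}_{\mathcal{I}\times\mathcal{J}}$ for cluster trees $\mathcal{T}_{\mathcal{I}},\mathcal{T}_{\mathcal{J}}$ is built recursively starting from the pair of roots: a block $(t,s)$ is kept as a leaf if it is admissible; otherwise, if $t$ or $s$ has children, its children are $\{t\}\times\operatorname{chil}(s)$ if $t$ is a leaf, $\operatorname{chil}(t)\times\{s\}$ if $s$ is a leaf, and $\operatorname{chil}(t)\times\operatorname{chil}(s)$ otherwise, and these are treated recursively; if neither has children, $(t,s)$ is an inadmissible leaf. $\mathcal{L}_{\mathcal{I}\times\mathcal{J}}$ denotes the set of leaves, split into admissible leaves $\mathcal{L}^+_{\mathcal{I}\times\mathcal{J}}$ and inadmissible leaves $\mathcal{L}^-_{\mathcal{I}\times\mathcal{J}}$; analogously for $\mathcal{T}_{\mathcal{J}\times\mathcal{K}}$. Given matrices $X\in\mathbb{R}^{\mathcal{I}\times\mathcal{J}}$, $Y\in\mathbb{R}^{\mathcal{J}\times\mathcal{K}}$,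 an accumulator for $(t,r)$ collects products $X|_{\hat t\times\hat s}Y|_{\hat s\times\hat r}$ with $(t,s)\in\mathcal{T}_{\mathcal{I}\times\mathcal{J}}$, $(s,r)\in\mathcal{T}_{\mathcal{J}\times\mathcal{K}}$; such a product is stored as a triple $(s,X|_{\hat t\times\hat s},Y|_{\hat s\times\hat r})$ in the set $\mathcal{P}_{tr}$ ("subdivided products") only if neither $(t,s)\in\mathcal{L}_{\mathcal{I}\times\mathcal{J}}$ nor $(s,r)\in\mathcal{L}_{\mathcal{J}\times\mathcal{K}}$ (products with an admissible or inadmissible leaf block are stored in other components of the accumulator). Starting from the accumulator of the root pair containing the full product, accumulators for children $(t',r')$ are obtained by splitting, where each triple $(s,\cdot,\cdot)\in\mathcal{P}_{tr}$ contributes the sub-products for $s'\in\operatorname{chil}(s)$ with the same storage rule. *)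

theory Defs
  imports "HOL-Analysis.Analysis"
begin

text \<open>A cluster tree: root cluster, children function, index labels of the clusters,
  and the associated geometric sets \<open>\<Omega>_c\<close> (in a Euclidean space).\<close>

record ('c, 'i, 'a) ctree =
  ct_root :: 'c
  ct_chil :: "'c \<Rightarrow> 'c set"
  ct_lab  :: "'c \<Rightarrow> 'i set"
  ct_dom  :: "'c \<Rightarrow> 'a set"

inductive_set ct_nodes :: "('c, 'i, 'a) ctree \<Rightarrow> 'c set" for T where
  root: "ct_root T \<in> ct_nodes T"
| child: "t \<in> ct_nodes T \<Longrightarrow> c \<in> ct_chil T t \<Longrightarrow> c \<in> ct_nodes T"

definition ct_index :: "('c, 'i, 'a) ctree \<Rightarrow> 'i set" where
  "ct_index T = ct_lab T (ct_root T)"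

definition is_cluster_tree :: "('c, 'i, 'a::euclidean_space) ctree \<Rightarrow> bool" where
  "is_cluster_tree T \<longleftrightarrow>
     finite (ct_index T) \<and> finite (ct_nodes T) \<and>
     \<comment> \<open>tree shape: no cycles, root is no child, each cluster has at most one parent\<close>
     wf {(c, t). t \<in> ct_nodes T \<and> c \<in> ct_chil T t} \<and>
     (\<forall>t\<in>ct_nodes T. ct_root T \<notin> ct_chil T t) \<and>
     (\<forall>t1\<in>ct_nodes T. \<forall>t2\<in>ct_nodes T. ct_chil T t1 \<inter> ct_chil T t2 \<noteq> {} \<longrightarrow> t1 = t2) \<and>
     \<comment> \<open>labels of children form a disjoint partition of the parent label\<close>
     (\<forall>t\<in>ct_nodes T. ct_chil T t \<noteq> {} \<longrightarrow>
         \<Union> (ct_lab T ` ct_chil T t) = ct_lab T t \<and> disjoint_family_on (ct_lab T) (ct_chil T t)) \<and>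
     \<comment> \<open>geometry: nonempty bounded sets, nested along the tree\<close>
     (\<forall>t\<in>ct_nodes T. ct_dom T t \<noteq> {} \<and> bounded (ct_dom T t) \<and>
         (\<forall>c\<in>ct_chil T t. ct_dom T c \<subseteq> ct_dom T t))"

definition admissible ::
  "real \<Rightarrow> ('c1, 'i, 'a::euclidean_space) ctree \<Rightarrow> ('c2, 'j, 'a) ctree \<Rightarrow> 'c1 \<Rightarrow> 'c2 \<Rightarrow> bool" where
  "admissible eta T S t s \<longleftrightarrow>
     max (diameter (ct_dom T t)) (diameter (ct_dom S s)) \<le> 2 * eta * setdist (ct_dom T t) (ct_dom S s)"

definition block_chil ::
  "('c1, 'i, 'a) ctree \<Rightarrow> ('c2, 'j, 'a) ctree \<Rightarrow> 'c1 \<Rightarrow> 'c2 \<Rightarrow> ('c1 \<times> 'c2) set" where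
  "block_chil T S t s =
     (if ct_chil T t = {} \<and> ct_chil S s = {} then {}
      else if ct_chil T t = {} then {t} \<times> ct_chil S s
      else if ct_chil S s = {} then ct_chil T t \<times> {s}
      else ct_chil T t \<times> ct_chil S s)"

inductive_set block_tree ::
  "real \<Rightarrow> ('c1, 'i, 'a::euclidean_space) ctree \<Rightarrow> ('c2, 'j, 'a) ctree \<Rightarrow> ('c1 \<times> 'c2) set"
  for eta T S where
  root: "(ct_root T, ct_root S) \<in> block_tree eta T S"
| child: "(t, s) \<in> block_tree eta T S \<Longrightarrow> \<not> admissible eta T S t s \<Longrightarrow>
          (t', s') \<in> block_chil T S t s \<Longrightarrow> (t', s') \<in> block_tree eta T S"

definition block_leaves ::
  "real \<Rightarrow> ('c1, 'i, 'a::euclidean_space) ctree \<Rightarrow> ('c2, 'j, 'a) ctree \<Rightarrow> ('c1 \<times> 'c2) set" where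
  "block_leaves eta T S =
     {(t, s) \<in> block_tree eta T S. admissible eta T S t s \<or> block_chil T S t s = {}}"

definition sons :: "('c, 'i, 'a) ctree \<Rightarrow> 'c \<Rightarrow> 'c set" where
  "sons T t = (if ct_chil T t = {} then {t} else ct_chil T t)"

text \<open>\<open>subdiv_idx \<dots> t r s\<close>: the accumulator for \<open>(t,r)\<close> contains the subdivided
  product with middle cluster \<open>s\<close>, i.e. the triple \<open>(s, X|t\<times>s, Y|s\<times>r)\<close> is in \<open>P_tr\<close>.\<close>
inductive subdiv_idx ::
  "real \<Rightarrow> ('cI, 'i, 'a::euclidean_space) ctree \<Rightarrow> ('cJ, 'j, 'a) ctree \<Rightarrow> ('cK, 'k, 'a) ctree
   \<Rightarrow> 'cI \<Rightarrow> 'cK \<Rightarrow> 'cJ \<Rightarrow> bool"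
  for eta TI TJ TK where
  root: "(ct_root TI, ct_root TJ) \<in> block_tree eta TI TJ - block_leaves eta TI TJ \<Longrightarrow>
         (ct_root TJ, ct_root TK) \<in> block_tree eta TJ TK - block_leaves eta TJ TK \<Longrightarrow>
         subdiv_idx eta TI TJ TK (ct_root TI) (ct_root TK) (ct_root TJ)"
| split: "subdiv_idx eta TI TJ TK t r s \<Longrightarrow>
          ct_chil TI t \<noteq> {} \<or> ct_chil TK r \<noteq> {} \<Longrightarrow>
          t' \<in> sons TI t \<Longrightarrow> r' \<in> sons TK r \<Longrightarrow> s' \<in> sons TJ s \<Longrightarrow>
          (t', s') \<in> block_tree eta TI TJ - block_leaves eta TI TJ \<Longrightarrow>
          (s', r') \<in> block_tree eta TJ TK - block_leaves eta TJ TK \<Longrightarrow>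
          subdiv_idx eta TI TJ TK t' r' s'"

definition subdivided_products ::
  "real \<Rightarrow> ('cI, 'i, 'a::euclidean_space) ctree \<Rightarrow> ('cJ, 'j, 'a) ctree \<Rightarrow> ('cK, 'k, 'a) ctree
   \<Rightarrow> ('i \<Rightarrow> 'j \<Rightarrow> real) \<Rightarrow> ('j \<Rightarrow> 'k \<Rightarrow> real) \<Rightarrow> 'cI \<Rightarrow> 'cK
   \<Rightarrow> ('cJ \<times> ('i \<times> 'j \<Rightarrow> real) \<times> ('j \<times> 'k \<Rightarrow> real)) set" where
  "subdivided_products eta TI TJ TK X Y t r =
     {(s, restrict (\<lambda>(i, j). X i j) (ct_lab TI t \<times> ct_lab TJ s),
          restrict (\<lambda>(j, k). Y j k) (ct_lab TJ s \<times> ct_lab TK r)) | s. subdiv_idx eta TI TJ TK t r s}"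

end

theory Submission
  imports Defs
begin

lemma bt_nodes:
  assumes "(t, s) \<in> block_tree eta T S"
  shows "t \<in> ct_nodes T \<and> s \<in> ct_nodes S"
  using assms
proof (induction rule: block_tree.induct)
  case root
  then show ?case by (auto intro: ct_nodes.root)
next
  case (child t s t' s')
  then show ?case
    by (auto simp: block_chil_def split: if_splits intro: ct_nodes.child)
qed

lemma subdiv_blocks:
  assumes "subdiv_idx eta TI TJ TK t r s"
  shows "(t, s) \<in> block_tree eta TI TJ - block_leaves eta TI TJ \<and>
         (s, r) \<in> block_tree eta TJ TK - block_leaves eta TJ TK"
  using assms by (cases rule: subdiv_idx.cases) auto

lemma geom:
  fixes A B C :: "'a::euclidean_space set"
  assumes eta: "eta > 0"
    and ne: "A \<noteq> {}" "B \<noteq> {}" "C \<noteq> {}" and bB: "bounded B"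
    and h1: "\<not> max (diameter A) (diameter B) \<le> 2 * eta * setdist A B"
    and h2: "\<not> max (diameter B) (diameter C) \<le> 2 * eta * setdist B C"
  shows "eta / (eta + 1) * setdist A C < max (diameter A) (max (diameter B) (diameter C))"
proof -
  define M where "M = max (diameter A) (max (diameter B) (diameter C))"
  have k1: "2 * eta * setdist A B < M" using h1 unfolding M_def by linarith
  have k2: "2 * eta * setdist B C < M" using h2 unfolding M_def by linarith
  have l1: "setdist A B < M / (2 * eta)"
    using k1 eta by (simp add: pos_less_divide_eq mult.commute)
  have l2: "setdist B C < M / (2 * eta)"
    using k2 eta by (simp add: pos_less_divide_eq mult.commute)
  obtain a b where ab: "a \<in> A" "b \<in> B" "dist a b < M / (2 * eta)"
    using setdist_ltE[OF l1 ne(1,2)] by blast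
  obtain b' c where bc: "b' \<in> B" "c \<in> C" "dist b' c < M / (2 * eta)"
    using setdist_ltE[OF l2 ne(2,3)] by blast
  have "dist b b' \<le> diameter B" using diameter_bounded_bound[OF bB ab(2) bc(1)] .
  hence "dist b b' \<le> M" by (simp add: M_def)
  have "setdist A C \<le> dist a c" by (rule setdist_le_dist[OF ab(1) bc(2)])
  also have "\<dots> \<le> dist a b + dist b b' + dist b' c"
    by (metis add_mono dist_triangle order_trans order_refl)
  also have "\<dots> < M / (2 * eta) + M + M / (2 * eta)"
    using ab(3) bc(3) \<open>dist b b' \<le> M\<close> by linarith
  also have "\<dots> = M * (eta + 1) / eta" using eta by (simp add: field_simps)
  finally have "setdist A C < M * (eta + 1) / eta" .
  hence "eta / (eta + 1) * setdist A C < eta / (eta + 1) * (M * (eta + 1) / eta)"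
    using eta by (intro mult_strict_left_mono) auto
  also have "\<dots> = M"
  proof -
    have "eta + 1 \<noteq> 0" "eta \<noteq> 0" using eta by auto
    then show ?thesis by (simp add: divide_simps)
  qed
  finally show ?thesis by (simp add: M_def)
qed

theorem lemma3p1:
  fixes eta :: real
    and TI :: "('cI, 'i, 'a::euclidean_space) ctree"
    and TJ :: "('cJ, 'j, 'a) ctree"
    and TK :: "('cK, 'k, 'a) ctree"
    and X :: "'i \<Rightarrow> 'j \<Rightarrow> real" and Y :: "'j \<Rightarrow> 'k \<Rightarrow> real"
    and t :: 'cI and r :: 'cK
  assumes "eta > 0"
    and "is_cluster_tree TI" and "is_cluster_tree TJ" and "is_cluster_tree TK"
    and "t \<in> ct_nodes TI" and "r \<in> ct_nodes TK"
    and "subdivided_products eta TI TJ TK X Y t r \<noteq> {}"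
  shows "\<exists>s\<in>ct_nodes TJ.
           (t, s) \<in> block_tree eta TI TJ - block_leaves eta TI TJ \<and>
           (s, r) \<in> block_tree eta TJ TK - block_leaves eta TJ TK \<and>
           eta / (eta + 1) * setdist (ct_dom TI t) (ct_dom TK r)
             < max (diameter (ct_dom TI t)) (max (diameter (ct_dom TJ s)) (diameter (ct_dom TK r)))"
proof -
  obtain s where s: "subdiv_idx eta TI TJ TK t r s"
    using assms(7) unfolding subdivided_products_def by blast
  note bl = subdiv_blocks[OF s]
  have sn: "s \<in> ct_nodes TJ" using bl bt_nodes[of s r eta TJ TK] by blast
  have na1: "\<not> admissible eta TI TJ t s" using bl by (auto simp: block_leaves_def)
  have na2: "\<not> admissible eta TJ TK s r" using bl by (auto simp: block_leaves_def)
  have ne1: "ct_dom TI t \<noteq> {}" using assms(2,5) unfolding is_cluster_tree_def by blast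
  have ne2: "ct_dom TJ s \<noteq> {}" using assms(3) sn unfolding is_cluster_tree_def by blast
  have ne3: "ct_dom TK r \<noteq> {}" using assms(4,6) unfolding is_cluster_tree_def by blast
  have bd: "bounded (ct_dom TJ s)" using assms(3) sn unfolding is_cluster_tree_def by blast
  note ne = ne1 ne2 ne3
  show ?thesis
    using sn bl geom[OF assms(1) ne bd] na1 na2 unfolding admissible_def by blast
qed

end
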